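(* Let $(k^\times)^{\mathbb{Z}}$ be the group of all sequences $\alpha=(\alpha_n)_{n\in\mathbb{Z}}$ of nonzero elements of $k$ under componentwise multiplication. For $\alpha\in(k^\times)^{\mathbb{Z}}$ let $\phi_\alpha:H\to H$ be the linear map with $$\phi_\alpha(x^n)=x^n,\qquad \phi_\alpha(x^ny^m)=\Big(\prod_{i=0}^{m-1}\alpha_{n+i}\Big)x^ny^m\quad(n\in\mathbb{Z},\ m\geq 1).$$ Then the map $(k^\times)^{\mathbb{Z}}\to \mathrm{Aut}_0^{gr}(H)$, $\alpha\mapsto\phi_\alpha$, is a group isomorphism.
   Context: Let $k$ be a field and $0\neq q\in k$ not a root of unity. Let $H=k_q[x,x^{-1},y]$ be the $k$-algebra generated by $x,x^{-1},y$ subject to $xx^{-1}=x^{-1}x=1$, $yx=qxy$. It is a Hopf algebra with $\Delta(x)=x\otimes x$, $\Delta(x^{-1})=x^{-1}\otimes x^{-1}$, $\Delta(y)=y\otimes x+1\otimes y$, $\varepsilon(x)=\varepsilon(x^{-1})=1$, $\varepsilon(y)=0$, $S(x)=x^{-1}$, $S(y)=-yx^{-1}$. The elements $x^ny^m$ ($n\in\mathbb{Z}$, $m\in\mathbb{N}$) form a $k$-basis, and $\Delta(x^ny^m)=\sum_{i=0}^m\binom{m}{i}_q x^ny^i\otimes x^{n+i}y^{m-i}$, where $(n)_q=1+q+\cdots+q^{n-1}$, $(n)!_q=(n)_q(n-1)_q\cdots(1)_q$, $(0)!_q=1$, and $\binom{m}{i}_q=\frac{(m)!_q}{(i)!_q(m-i)!_q}$.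 Let $H_0=\mathrm{span}\{x^n:n\in\mathbb{Z}\}$ and $H(m)=H_0y^m$; then $H=\bigoplus_{m\geq0}H(m)$ is a graded coalgebra. $\mathrm{Aut}_c(H)$ is the group (under composition) of all coalgebra automorphisms of $H$; $\mathrm{Aut}_0(H)=\{\phi\in\mathrm{Aut}_c(H):\phi(1)=1\}$; $\mathrm{Aut}_c^{gr}(H)=\{\phi\in\mathrm{Aut}_c(H):\phi(H(m))\subseteq H(m)\ \forall m\geq0\}$; $\mathrm{Aut}_0^{gr}(H)=\mathrm{Aut}_c^{gr}(H)\cap\mathrm{Aut}_0(H)$. *)

theory Defs
  imports "HOL-Library.Poly_Mapping" "HOL-Algebra.Group"
begin

text \<open>The coalgebra H = k_q[x,x^-1,y] is modelled as the free k-vector space on the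
basis x^n y^m, indexed by (n,m) :: int \<times> nat, i.e. finitely supported functions.
H \<otimes> H is the free vector space on pairs of basis elements.\<close>

type_synonym 'k hopf = "(int \<times> nat) \<Rightarrow>\<^sub>0 'k"
type_synonym 'k hopf2 = "((int \<times> nat) \<times> (int \<times> nat)) \<Rightarrow>\<^sub>0 'k"

definition pm_scale :: "'k::field \<Rightarrow> ('b \<Rightarrow>\<^sub>0 'k) \<Rightarrow> ('b \<Rightarrow>\<^sub>0 'k)" where
  "pm_scale c u = Poly_Mapping.map (\<lambda>a. c * a) u"

definition qint :: "'k::field \<Rightarrow> nat \<Rightarrow> 'k" where
  "qint q n = (\<Sum>i<n. q ^ i)"

definition qfact :: "'k::field \<Rightarrow> nat \<Rightarrow> 'k" where
  "qfact q n = (\<Prod>i\<in>{1..n}. qint q i)"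

definition qbinom :: "'k::field \<Rightarrow> nat \<Rightarrow> nat \<Rightarrow> 'k" where
  "qbinom q m i = qfact q m / (qfact q i * qfact q (m - i))"

definition bas :: "int \<Rightarrow> nat \<Rightarrow> 'k::field hopf" where
  "bas n m = Poly_Mapping.single (n, m) 1"

definition comult_basis :: "'k::field \<Rightarrow> int \<times> nat \<Rightarrow> 'k hopf2" where
  "comult_basis q b = (case b of (n, m) \<Rightarrow>
     (\<Sum>i\<in>{0..m}. Poly_Mapping.single ((n, i), (n + int i, m - i)) (qbinom q m i)))"

definition comult :: "'k::field \<Rightarrow> 'k hopf \<Rightarrow> 'k hopf2" where
  "comult q u = (\<Sum>b\<in>Poly_Mapping.keys u. pm_scale (Poly_Mapping.lookup u b) (comult_basis q b))"

definition counit :: "'k::field hopf \<Rightarrow> 'k" where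
  "counit u = (\<Sum>b\<in>Poly_Mapping.keys u. if snd b = 0 then Poly_Mapping.lookup u b else 0)"

definition tens :: "'k::field hopf \<Rightarrow> 'k hopf \<Rightarrow> 'k hopf2" where
  "tens u v = (\<Sum>b\<in>Poly_Mapping.keys u. \<Sum>c\<in>Poly_Mapping.keys v. Poly_Mapping.single (b, c) (Poly_Mapping.lookup u b * Poly_Mapping.lookup v c))"

text \<open>f \<otimes> g applied to an element of H \<otimes> H (for linear f, g)\<close>
definition map_tens :: "('k::field hopf \<Rightarrow> 'k hopf) \<Rightarrow> ('k hopf \<Rightarrow> 'k hopf) \<Rightarrow> 'k hopf2 \<Rightarrow> 'k hopf2" where
  "map_tens f g t = (\<Sum>bc\<in>Poly_Mapping.keys t.
      pm_scale (Poly_Mapping.lookup t bc) (tens (f (Poly_Mapping.single (fst bc) 1)) (g (Poly_Mapping.single (snd bc) 1))))"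

definition is_linear :: "('k::field hopf \<Rightarrow> 'k hopf) \<Rightarrow> bool" where
  "is_linear f \<longleftrightarrow> (\<forall>u v. f (u + v) = f u + f v) \<and> (\<forall>c u. f (pm_scale c u) = pm_scale c (f u))"

definition coalg_map :: "'k::field \<Rightarrow> ('k hopf \<Rightarrow> 'k hopf) \<Rightarrow> bool" where
  "coalg_map q f \<longleftrightarrow> is_linear f
     \<and> (\<forall>u. comult q (f u) = map_tens f f (comult q u))
     \<and> (\<forall>u. counit (f u) = counit u)"

definition Aut_c :: "'k::field \<Rightarrow> ('k hopf \<Rightarrow> 'k hopf) set" where
  "Aut_c q = {f. coalg_map q f \<and> bij f}"

definition Aut_0 :: "'k::field \<Rightarrow> ('k hopf \<Rightarrow> 'k hopf) set" where
  "Aut_0 q = {f \<in> Aut_c q. f (bas 0 0) = bas 0 0}"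

definition Hdeg :: "nat \<Rightarrow> 'k::field hopf set" where
  "Hdeg m = {u. \<forall>b\<in>Poly_Mapping.keys u. snd b = m}"

definition Aut_c_gr :: "'k::field \<Rightarrow> ('k hopf \<Rightarrow> 'k hopf) set" where
  "Aut_c_gr q = {f \<in> Aut_c q. \<forall>m. f ` Hdeg m \<subseteq> Hdeg m}"

definition Aut_0_gr :: "'k::field \<Rightarrow> ('k hopf \<Rightarrow> 'k hopf) set" where
  "Aut_0_gr q = Aut_c_gr q \<inter> Aut_0 q"

definition Aut_0_gr_group :: "'k::field \<Rightarrow> ('k hopf \<Rightarrow> 'k hopf) monoid" where
  "Aut_0_gr_group q = \<lparr>carrier = Aut_0_gr q, mult = (\<circ>), one = id\<rparr>"

definition seq_group :: "(int \<Rightarrow> 'k::field) monoid" where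
  "seq_group = \<lparr>carrier = {\<alpha>. \<forall>n. \<alpha> n \<noteq> 0}, mult = (\<lambda>\<alpha> \<beta> n. \<alpha> n * \<beta> n), one = (\<lambda>n. 1)\<rparr>"

definition phi_alpha :: "(int \<Rightarrow> 'k::field) \<Rightarrow> 'k hopf \<Rightarrow> 'k hopf" where
  "phi_alpha \<alpha> u = (\<Sum>b\<in>Poly_Mapping.keys u. case b of (n, m) \<Rightarrow>
      Poly_Mapping.single (n, m) ((\<Prod>i<m. \<alpha> (n + int i)) * Poly_Mapping.lookup u (n, m)))"

end

theory Submission
  imports Defs
begin

lemma lookup_pm_scale[simp]: "Poly_Mapping.lookup (pm_scale c u) b = c * Poly_Mapping.lookup u b"
  by (simp add: pm_scale_def Poly_Mapping.map.rep_eq when_def)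

lemma pm_scale_zero[simp]: "pm_scale 0 u = 0"
  by (rule poly_mapping_eqI) simp

lemma sum_keys_superset:
  assumes "finite S" "Poly_Mapping.keys u \<subseteq> S"
  shows "(\<Sum>b\<in>Poly_Mapping.keys u. pm_scale (Poly_Mapping.lookup u b) (g b)) = (\<Sum>b\<in>S. pm_scale (Poly_Mapping.lookup u b) (g b))"
  using assms by (intro sum.mono_neutral_left) (auto simp: in_keys_iff)

lemma lookup_comult_basis:
  "Poly_Mapping.lookup (comult_basis q (n,m)) ((a,i),(c,j)) =
     (if a = n \<and> c = n + int i \<and> i + j = m then qbinom q m i else 0)"
proof -
  have "Poly_Mapping.lookup (comult_basis q (n,m)) ((a,i),(c,j)) =
     (\<Sum>l\<in>{0..m}. if l = i then (if a = n \<and> c = n + int i \<and> j = m - i then qbinom q m i else 0) else 0)"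
    unfolding comult_basis_def prod.case lookup_sum
    by (rule sum.cong) (auto simp: lookup_single when_def)
  also have "\<dots> = (if a = n \<and> c = n + int i \<and> i + j = m then qbinom q m i else 0)"
    by (subst sum.delta) auto
  finally show ?thesis .
qed

lemma lookup_comult:
  fixes u :: "'k::field hopf"
  shows "Poly_Mapping.lookup (comult q u) ((a,i),(c,j)) =
     (if c = a + int i then qbinom q (i+j) i * Poly_Mapping.lookup u (a, i+j) else 0)"
proof -
  have "Poly_Mapping.lookup (comult q u) ((a,i),(c,j)) =
     (\<Sum>b\<in>Poly_Mapping.keys u. if b = (a, i+j) then (if c = a + int i then qbinom q (i+j) i * Poly_Mapping.lookup u (a, i+j) else 0) else 0)"
    unfolding comult_def lookup_sum
    by (rule sum.cong) (auto simp: lookup_comult_basis split: if_split_asm)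
  also have "\<dots> = (if c = a + int i then qbinom q (i+j) i * Poly_Mapping.lookup u (a, i+j) else 0)"
    by (subst sum.delta) (auto simp: in_keys_iff)
  finally show ?thesis .
qed

lemma lookup_tens: "Poly_Mapping.lookup (tens u v) (b,c) = Poly_Mapping.lookup u b * Poly_Mapping.lookup v c"
proof -
  have "Poly_Mapping.lookup (tens u v) (b,c) = (\<Sum>b'\<in>Poly_Mapping.keys u. \<Sum>c'\<in>Poly_Mapping.keys v. if b' = b \<and> c' = c then Poly_Mapping.lookup u b' * Poly_Mapping.lookup v c' else 0)"
    unfolding tens_def lookup_sum by (simp add: lookup_single when_def)
  also have "\<dots> = (\<Sum>b'\<in>Poly_Mapping.keys u. if b' = b then (\<Sum>c'\<in>Poly_Mapping.keys v. if c' = c then Poly_Mapping.lookup u b' * Poly_Mapping.lookup v c' else 0) else 0)"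
    by (rule sum.cong) (auto intro: sum.cong)
  also have "\<dots> = Poly_Mapping.lookup u b * Poly_Mapping.lookup v c"
    by (simp add: in_keys_iff)
  finally show ?thesis .
qed

lemma lookup_map_tens: "Poly_Mapping.lookup (map_tens f g t) (b,c) =
  (\<Sum>bc\<in>Poly_Mapping.keys t. Poly_Mapping.lookup t bc * (Poly_Mapping.lookup (f (Poly_Mapping.single (fst bc) 1)) b * Poly_Mapping.lookup (g (Poly_Mapping.single (snd bc) 1)) c))"
  unfolding map_tens_def lookup_sum by (simp add: lookup_tens)

lemma lookup_map_tens_superset:
  assumes "finite S" "Poly_Mapping.keys t \<subseteq> S"
  shows "Poly_Mapping.lookup (map_tens f g t) (b,c) =
  (\<Sum>bc\<in>S. Poly_Mapping.lookup t bc * (Poly_Mapping.lookup (f (Poly_Mapping.single (fst bc) 1)) b * Poly_Mapping.lookup (g (Poly_Mapping.single (snd bc) 1)) c))"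
  unfolding lookup_map_tens
  by (rule sum.mono_neutral_left) (use assms in \<open>auto simp: in_keys_iff\<close>)

lemma linear_zero: "is_linear f \<Longrightarrow> f 0 = 0"
proof -
  assume "is_linear f"
  then have "f (0 + 0) = f 0 + f 0" unfolding is_linear_def by blast
  then show "f 0 = 0" by simp
qed

lemma linear_sum: "is_linear f \<Longrightarrow> f (sum g S) = (\<Sum>s\<in>S. f (g s))"
proof (induction S rule: infinite_finite_induct)
  case (insert x F)
  then show ?case unfolding is_linear_def by simp
qed (auto simp: linear_zero)

lemma pm_expand: "u = (\<Sum>b\<in>Poly_Mapping.keys u. pm_scale (Poly_Mapping.lookup u b) (Poly_Mapping.single b 1))"
proof (rule poly_mapping_eqI)
  fix k
  have "Poly_Mapping.lookup (\<Sum>b\<in>Poly_Mapping.keys u. pm_scale (Poly_Mapping.lookup u b) (Poly_Mapping.single b 1)) k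
     = (\<Sum>b\<in>Poly_Mapping.keys u. if b = k then Poly_Mapping.lookup u k else 0)"
    unfolding lookup_sum by (rule sum.cong) (simp_all add: lookup_single when_def)
  also have "\<dots> = Poly_Mapping.lookup u k" by (simp add: in_keys_iff)
  finally show "Poly_Mapping.lookup u k = Poly_Mapping.lookup (\<Sum>b\<in>Poly_Mapping.keys u. pm_scale (Poly_Mapping.lookup u b) (Poly_Mapping.single b 1)) k" by (rule sym)
qed

lemma linear_expand: "is_linear f \<Longrightarrow> f u = (\<Sum>b\<in>Poly_Mapping.keys u. pm_scale (Poly_Mapping.lookup u b) (f (Poly_Mapping.single b 1)))"
proof -
  assume L: "is_linear f"
  have "f u = f (\<Sum>b\<in>Poly_Mapping.keys u. pm_scale (Poly_Mapping.lookup u b) (Poly_Mapping.single b 1))"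
    by (rule arg_cong[where f=f], rule pm_expand)
  also have "\<dots> = (\<Sum>b\<in>Poly_Mapping.keys u. f (pm_scale (Poly_Mapping.lookup u b) (Poly_Mapping.single b 1)))"
    by (rule linear_sum[OF L])
  also have "\<dots> = (\<Sum>b\<in>Poly_Mapping.keys u. pm_scale (Poly_Mapping.lookup u b) (f (Poly_Mapping.single b 1)))"
    using L by (simp add: is_linear_def)
  finally show ?thesis .
qed

lemma linear_eqI:
  assumes "is_linear f" "is_linear g" "\<And>b. f (Poly_Mapping.single b 1) = g (Poly_Mapping.single b 1)"
  shows "f = g"
proof (rule ext)
  fix u
  have "f u = (\<Sum>b\<in>Poly_Mapping.keys u. pm_scale (Poly_Mapping.lookup u b) (f (Poly_Mapping.single b 1)))"
    by (rule linear_expand[OF assms(1)])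
  also have "\<dots> = (\<Sum>b\<in>Poly_Mapping.keys u. pm_scale (Poly_Mapping.lookup u b) (g (Poly_Mapping.single b 1)))"
    by (simp only: assms(3))
  also have "\<dots> = g u" by (rule linear_expand[OF assms(2), symmetric])
  finally show "f u = g u" .
qed


definition PP :: "(int \<Rightarrow> 'k::field) \<Rightarrow> int \<Rightarrow> nat \<Rightarrow> 'k" where
  "PP \<alpha> n m = (\<Prod>i<m. \<alpha> (n + int i))"

lemma PP_0[simp]: "PP \<alpha> n 0 = 1" by (simp add: PP_def)

lemma PP_add: "PP \<alpha> a (i + j) = PP \<alpha> a i * PP \<alpha> (a + int i) j"
  by (induction j) (simp_all add: PP_def algebra_simps)

lemma PP_Suc: "PP \<alpha> n (Suc m) = \<alpha> n * PP \<alpha> (n + 1) m"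
  unfolding PP_def prod.lessThan_Suc_shift by (simp add: algebra_simps)

lemma PP_1[simp]: "PP \<alpha> n 1 = \<alpha> n" by (simp add: PP_def)

lemma PP_mult: "PP (\<lambda>n. \<alpha> n * \<beta> n) a i = PP \<alpha> a i * PP \<beta> a i"
  by (simp add: PP_def prod.distrib)

lemma lookup_phi: "Poly_Mapping.lookup (phi_alpha \<alpha> u) k = PP \<alpha> (fst k) (snd k) * Poly_Mapping.lookup u k"
proof -
  have "Poly_Mapping.lookup (phi_alpha \<alpha> u) k = (\<Sum>b\<in>Poly_Mapping.keys u. if b = k then PP \<alpha> (fst k) (snd k) * Poly_Mapping.lookup u k else 0)"
    unfolding phi_alpha_def lookup_sum
    by (rule sum.cong) (auto simp: lookup_single when_def PP_def)
  also have "\<dots> = PP \<alpha> (fst k) (snd k) * Poly_Mapping.lookup u k" by (simp add: in_keys_iff)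
  finally show ?thesis .
qed

lemma phi_linear: "is_linear (phi_alpha \<alpha>)"
  unfolding is_linear_def
  by (auto intro!: poly_mapping_eqI simp: lookup_phi lookup_add algebra_simps)

lemma phi_comp: "phi_alpha (\<lambda>n. \<alpha> n * \<beta> n) = phi_alpha \<alpha> \<circ> phi_alpha \<beta>"
  by (auto intro!: ext poly_mapping_eqI simp: lookup_phi PP_mult)

lemma phi_one: "phi_alpha (\<lambda>n. 1) = id"
  by (auto intro!: ext poly_mapping_eqI simp: lookup_phi PP_def)

lemma keys_phi: "Poly_Mapping.keys (phi_alpha \<alpha> u) \<subseteq> Poly_Mapping.keys u"
  by (auto simp: in_keys_iff lookup_phi)

lemma lookup_map_tens_diag:
  "Poly_Mapping.lookup (map_tens (phi_alpha \<alpha>) (phi_alpha \<beta>) t) (b,c) = Poly_Mapping.lookup t (b,c) * (PP \<alpha> (fst b) (snd b) * PP \<beta> (fst c) (snd c))"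
proof -
  have "Poly_Mapping.lookup (map_tens (phi_alpha \<alpha>) (phi_alpha \<beta>) t) (b,c) =
     (\<Sum>bc\<in>Poly_Mapping.keys t. if bc = (b,c) then Poly_Mapping.lookup t (b,c) * (PP \<alpha> (fst b) (snd b) * PP \<beta> (fst c) (snd c)) else 0)"
    unfolding lookup_map_tens
    by (rule sum.cong) (auto simp: lookup_phi lookup_single when_def)
  also have "\<dots> = Poly_Mapping.lookup t (b,c) * (PP \<alpha> (fst b) (snd b) * PP \<beta> (fst c) (snd c))"
    by (simp add: in_keys_iff)
  finally show ?thesis .
qed

lemma phi_comult: "comult q (phi_alpha \<alpha> u) = map_tens (phi_alpha \<alpha>) (phi_alpha \<alpha>) (comult q u)"
proof (rule poly_mapping_eqI)
  fix k :: "(int \<times> nat) \<times> (int \<times> nat)"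
  obtain a i c j where k: "k = ((a,i),(c,j))" by (metis prod.exhaust)
  show "Poly_Mapping.lookup (comult q (phi_alpha \<alpha> u)) k = Poly_Mapping.lookup (map_tens (phi_alpha \<alpha>) (phi_alpha \<alpha>) (comult q u)) k"
    unfolding k lookup_map_tens_diag lookup_comult
    by (simp add: lookup_phi PP_add)
qed

lemma counit_superset:
  assumes "finite S" "Poly_Mapping.keys u \<subseteq> S"
  shows "counit u = (\<Sum>b\<in>S. if snd b = 0 then Poly_Mapping.lookup u b else 0)"
  unfolding counit_def using assms
  by (intro sum.mono_neutral_left) (auto simp: in_keys_iff)

lemma phi_counit: "counit (phi_alpha \<alpha> u) = counit u"
proof -
  have "counit (phi_alpha \<alpha> u) = (\<Sum>b\<in>Poly_Mapping.keys u. if snd b = 0 then Poly_Mapping.lookup (phi_alpha \<alpha> u) b else 0)"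
    by (rule counit_superset) (auto simp: keys_phi)
  also have "\<dots> = counit u" unfolding counit_def
    by (rule sum.cong) (auto simp: lookup_phi)
  finally show ?thesis .
qed

lemma phi_Hdeg: "u \<in> Hdeg m \<Longrightarrow> phi_alpha \<alpha> u \<in> Hdeg m"
  using keys_phi unfolding Hdeg_def by blast

lemma phi_bas00: "phi_alpha \<alpha> (bas 0 0) = bas 0 0"
  by (auto intro!: poly_mapping_eqI simp: lookup_phi bas_def lookup_single when_def)

lemma phi_bij:
  assumes "\<forall>n. \<alpha> n \<noteq> 0"
  shows "bij (phi_alpha \<alpha>)"
proof (rule o_bij)
  have "phi_alpha (\<lambda>n. inverse (\<alpha> n)) \<circ> phi_alpha \<alpha> = phi_alpha (\<lambda>n. inverse (\<alpha> n) * \<alpha> n)" by (simp add: phi_comp)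
  also have "\<dots> = id" using assms by (simp add: phi_one)
  finally show "phi_alpha (\<lambda>n. inverse (\<alpha> n)) \<circ> phi_alpha \<alpha> = id" .
  have "phi_alpha \<alpha> \<circ> phi_alpha (\<lambda>n. inverse (\<alpha> n)) = phi_alpha (\<lambda>n. \<alpha> n * inverse (\<alpha> n))" by (simp add: phi_comp)
  also have "\<dots> = id" using assms by (simp add: phi_one)
  finally show "phi_alpha \<alpha> \<circ> phi_alpha (\<lambda>n. inverse (\<alpha> n)) = id" .
qed

lemma phi_in_Aut:
  assumes "\<forall>n. \<alpha> n \<noteq> 0"
  shows "phi_alpha \<alpha> \<in> Aut_0_gr q"
  unfolding Aut_0_gr_def Aut_c_gr_def Aut_0_def Aut_c_def coalg_map_def
  using phi_linear phi_comult phi_counit phi_bij[OF assms] phi_Hdeg phi_bas00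
  by blast


lemma qint_nz:
  fixes q :: "'k::field"
  assumes "\<forall>n::nat. n > 0 \<longrightarrow> q ^ n \<noteq> 1" "i > 0"
  shows "qint q i \<noteq> 0"
proof -
  have q1: "q \<noteq> 1" using assms(1) by (metis power_one_right zero_less_one)
  have "qint q i = (q ^ i - 1) / (q - 1)" unfolding qint_def by (rule geometric_sum[OF q1])
  moreover have "q ^ i - 1 \<noteq> 0" using assms by auto
  moreover have "q - 1 \<noteq> 0" using q1 by auto
  ultimately show ?thesis by simp
qed

lemma qfact_nz:
  fixes q :: "'k::field"
  assumes "\<forall>n::nat. n > 0 \<longrightarrow> q ^ n \<noteq> 1"
  shows "qfact q m \<noteq> 0"
  unfolding qfact_def using qint_nz[OF assms] by (simp add: prod_zero_iff)

lemma qbinom_0: "\<forall>n::nat. n > 0 \<longrightarrow> q ^ n \<noteq> 1 \<Longrightarrow> qbinom q m 0 = 1"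
  using qfact_nz[of q m] by (simp add: qbinom_def qfact_def)

lemma qbinom_11: "qbinom q 1 1 = 1"
  by (simp add: qbinom_def qfact_def qint_def)

lemma qbinom_1_nz: "\<forall>n::nat. n > 0 \<longrightarrow> q ^ n \<noteq> 1 \<Longrightarrow> qbinom q m 1 \<noteq> 0"
  using qfact_nz[of q] by (simp add: qbinom_def)

lemma bas_Hdeg: "bas n m \<in> Hdeg m"
  by (simp add: bas_def Hdeg_def)

lemma Hdeg_lookup: "u \<in> Hdeg m \<Longrightarrow> i \<noteq> m \<Longrightarrow> Poly_Mapping.lookup u (a,i) = 0"
  unfolding Hdeg_def using in_keys_iff[of "(a,i)" u] by fastforce

lemma lookup_bas: "Poly_Mapping.lookup (bas n m) k = (if k = (n,m) then 1 else 0)"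
  by (simp add: bas_def lookup_single when_def)

lemma Aut_facts:
  assumes "f \<in> Aut_0_gr q"
  shows "is_linear f" "\<And>u. comult q (f u) = map_tens f f (comult q u)" "inj f"
    "\<And>u m. u \<in> Hdeg m \<Longrightarrow> f u \<in> Hdeg m" "f (bas 0 0) = bas 0 0"
  using assms unfolding Aut_0_gr_def Aut_c_gr_def Aut_0_def Aut_c_def coalg_map_def bij_def
  by blast+

lemma keys_comult_bas:
  "Poly_Mapping.keys (comult q (bas n m)) \<subseteq> (\<lambda>l. ((n,l),(n + int l, m - l))) ` {0..m}"
proof
  fix k assume k: "k \<in> Poly_Mapping.keys (comult q (bas n m))"
  obtain a i c j where kk: "k = ((a,i),(c,j))" by (metis prod.exhaust)
  from k have "Poly_Mapping.lookup (comult q (bas n m)) ((a,i),(c,j)) \<noteq> 0" unfolding kk in_keys_iff .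
  then have "c = a + int i" "a = n" "i + j = m" unfolding lookup_comult lookup_bas
    by (auto split: if_splits)
  then show "k \<in> (\<lambda>l. ((n,l),(n + int l, m - l))) ` {0..m}"
    unfolding kk by (intro image_eqI[where x=i]) auto
qed

lemma STAR:
  assumes f: "f \<in> Aut_0_gr q" and im: "i \<le> m"
  shows "(if c = a + int i then qbinom q m i * Poly_Mapping.lookup (f (bas n m)) (a, m) else 0)
    = qbinom q m i * (Poly_Mapping.lookup (f (bas n i)) (a,i) * Poly_Mapping.lookup (f (bas (n + int i) (m-i))) (c, m-i))"
proof -
  note F = Aut_facts[OF f]
  let ?S = "(\<lambda>l. ((n,l),(n + int l, m - l))) ` {0..m}"
  have "Poly_Mapping.lookup (comult q (f (bas n m))) ((a,i),(c,m-i)) = Poly_Mapping.lookup (map_tens f f (comult q (bas n m))) ((a,i),(c,m-i))"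
    using F(2) by simp
  also have "\<dots> = (\<Sum>bc\<in>?S. Poly_Mapping.lookup (comult q (bas n m)) bc *
      (Poly_Mapping.lookup (f (Poly_Mapping.single (fst bc) 1)) (a,i) * Poly_Mapping.lookup (f (Poly_Mapping.single (snd bc) 1)) (c,m-i)))"
    by (rule lookup_map_tens_superset) (auto simp: keys_comult_bas)
  also have "\<dots> = (\<Sum>l\<in>{0..m}. Poly_Mapping.lookup (comult q (bas n m)) ((n,l),(n + int l, m - l)) *
      (Poly_Mapping.lookup (f (bas n l)) (a,i) * Poly_Mapping.lookup (f (bas (n + int l) (m - l))) (c,m-i)))"
    by (subst sum.reindex) (auto simp: inj_on_def bas_def)
  also have "\<dots> = (\<Sum>l\<in>{0..m}. if l = i then qbinom q m i * (Poly_Mapping.lookup (f (bas n i)) (a,i) * Poly_Mapping.lookup (f (bas (n + int i) (m-i))) (c, m-i)) else 0)"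
  proof (rule sum.cong[OF refl])
    fix l assume l: "l \<in> {0..m}"
    show "Poly_Mapping.lookup (comult q (bas n m)) ((n,l),(n + int l, m - l)) *
      (Poly_Mapping.lookup (f (bas n l)) (a,i) * Poly_Mapping.lookup (f (bas (n + int l) (m - l))) (c,m-i))
      = (if l = i then qbinom q m i * (Poly_Mapping.lookup (f (bas n i)) (a,i) * Poly_Mapping.lookup (f (bas (n + int i) (m-i))) (c, m-i)) else 0)"
    proof (cases "l = i")
      case True
      then show ?thesis using l by (simp add: lookup_comult lookup_bas)
    next
      case False
      then have "Poly_Mapping.lookup (f (bas n l)) (a,i) = 0"
        by (intro Hdeg_lookup[of _ l] F(4) bas_Hdeg) auto
      then show ?thesis using False by simp
    qed
  qed
  also have "\<dots> = qbinom q m i * (Poly_Mapping.lookup (f (bas n i)) (a,i) * Poly_Mapping.lookup (f (bas (n + int i) (m-i))) (c, m-i))"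
    using im by simp
  finally have E: "Poly_Mapping.lookup (comult q (f (bas n m))) ((a,i),(c,m-i)) = qbinom q m i * (Poly_Mapping.lookup (f (bas n i)) (a,i) * Poly_Mapping.lookup (f (bas (n + int i) (m-i))) (c, m-i))" .
  have im2: "i + (m - i) = m" using im by simp
  show ?thesis using E[unfolded lookup_comult im2] .
qed


lemma f_bas_nz:
  fixes q :: "'k::field"
  assumes f: "f \<in> Aut_0_gr q"
  shows "\<exists>a. Poly_Mapping.lookup (f (bas n m)) (a, m) \<noteq> 0"
proof (rule ccontr)
  note F = Aut_facts[OF f]
  assume "\<not> ?thesis"
  then have z: "\<And>a. Poly_Mapping.lookup (f (bas n m)) (a, m) = 0" by blast
  have "f (bas n m) = 0"
  proof (rule poly_mapping_eqI)
    fix k :: "int \<times> nat"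
    obtain a i where k: "k = (a,i)" by (metis prod.exhaust)
    show "Poly_Mapping.lookup (f (bas n m)) k = Poly_Mapping.lookup 0 k"
      using z Hdeg_lookup[OF F(4)[OF bas_Hdeg[of n m]], of i a] unfolding k by (cases "i = m") auto
  qed
  also have "\<dots> = f 0" using linear_zero[OF F(1)] by simp
  finally have "f (bas n m) = f 0" .
  then have "(bas n m :: 'k hopf) = 0" by (rule injD[OF F(3)])
  then have "Poly_Mapping.lookup (bas n m :: 'k hopf) (n,m) = 0" by simp
  then show False by (simp add: lookup_bas)
qed

lemma classify:
  fixes q :: "'k::field"
  assumes f: "f \<in> Aut_0_gr q" and qa: "\<forall>n::nat. n > 0 \<longrightarrow> q ^ n \<noteq> 1"
  shows "\<exists>\<alpha>. (\<forall>n. \<alpha> n \<noteq> 0) \<and> f = phi_alpha \<alpha>"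
proof -
  note F = Aut_facts[OF f]
  define G where "G n m a = Poly_Mapping.lookup (f (bas n m)) (a, m)" for n m a
  have nz: "\<exists>a. G n m a \<noteq> 0" for n m using f_bas_nz[OF f] unfolding G_def by blast
  have S: "(if c = a + int i then qbinom q m i * G n m a else 0) = qbinom q m i * (G n i a * G (n + int i) (m - i) c)"
    if "i \<le> m" for i m c a n
    using STAR[OF f that, of c a n] unfolding G_def .
  have S0: "(if c = a then G n 0 a else 0) = G n 0 a * G n 0 c" for n a c
    using S[of 0 0 c a n] by (simp only: qbinom_0[OF qa] mult_1 diff_zero of_nat_0 add_0_right le_refl)
  define \<sigma> where "\<sigma> n = (SOME a. G n 0 a \<noteq> 0)" for n
  have s1: "G n 0 (\<sigma> n) \<noteq> 0" for n unfolding \<sigma>_def using nz[of n 0] by (rule someI_ex)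
  have G0: "G n 0 c = (if c = \<sigma> n then 1 else 0)" for n c
  proof (cases "c = \<sigma> n")
    case True
    have "G n 0 (\<sigma> n) = G n 0 (\<sigma> n) * G n 0 (\<sigma> n)" using S0[of "\<sigma> n" "\<sigma> n" n] by simp
    then show ?thesis using True s1[of n] by simp
  next
    case False
    have "0 = G n 0 (\<sigma> n) * G n 0 c" using S0[of c "\<sigma> n" n] False by simp
    then show ?thesis using False s1[of n] by simp
  qed
  have s00: "\<sigma> 0 = 0"
  proof -
    have "G 0 0 a = (if a = 0 then 1 else 0)" for a unfolding G_def F(5) by (simp add: lookup_bas)
    then show ?thesis using s1[of 0] by (auto split: if_splits)
  qed
  have S1a: "(if c = a then G n 1 a else 0) = G n 0 a * G n 1 c" for n a c
    using S[of 0 1 c a n] by (simp only: qbinom_0[OF qa] mult_1 diff_zero of_nat_0 add_0_right zero_le_one)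
  have G1z: "G n 1 a = 0" if "a \<noteq> \<sigma> n" for n a
    using S1a[of a a n] that by (simp add: G0)
  have G1nz: "G n 1 (\<sigma> n) \<noteq> 0" for n using nz[of n 1] G1z by metis
  have S1b: "(if c = a + 1 then G n 1 a else 0) = G n 1 a * G (n + 1) 0 c" for n a c
    using S[of 1 1 c a n] by (simp only: qbinom_11 mult_1 diff_self_eq_0 of_nat_1 le_refl)
  have sstep: "\<sigma> (n + 1) = \<sigma> n + 1" for n
  proof -
    have "G n 1 (\<sigma> n) = G n 1 (\<sigma> n) * G (n + 1) 0 (\<sigma> n + 1)" using S1b[of "\<sigma> n + 1" "\<sigma> n" n] by simp
    then have "G (n + 1) 0 (\<sigma> n + 1) = 1" using G1nz[of n] by simp
    then show ?thesis by (simp add: G0 split: if_splits)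
  qed
  have sid: "\<sigma> n = n" for n
  proof (induction n rule: int_induct[where k=0])
    case base then show ?case by (rule s00)
  next
    case (step1 i) then show ?case by (simp add: sstep)
  next
    case (step2 i) then show ?case using sstep[of "i - 1"] by simp
  qed
  define \<alpha> where "\<alpha> n = G n 1 n" for n
  have anz: "\<alpha> n \<noteq> 0" for n using G1nz[of n] unfolding \<alpha>_def sid .
  have main: "\<forall>n a. G n m a = (if a = n then PP \<alpha> n m else 0)" for m
  proof (induction m)
    case 0 then show ?case by (simp add: G0 sid)
  next
    case (Suc m)
    have z: "G n (Suc m) a = 0" if "a \<noteq> n" for n a
      using S[of 0 "Suc m" a a n] qbinom_0[OF qa, of "Suc m"] that by (simp add: G0 sid)
    have d: "G n (Suc m) n = PP \<alpha> n (Suc m)" for n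
    proof -
      have "qbinom q (Suc m) 1 * G n (Suc m) n = qbinom q (Suc m) 1 * (G n 1 n * G (n + 1) m (n + 1))"
        using S[of 1 "Suc m" "n + 1" n n] by simp
      then have "G n (Suc m) n = G n 1 n * G (n + 1) m (n + 1)" using qbinom_1_nz[OF qa, of "Suc m"] by simp
      then show ?thesis using Suc.IH by (simp add: PP_Suc \<alpha>_def)
    qed
    show ?case using z d by auto
  qed
  have fb: "f (bas n m) = phi_alpha \<alpha> (bas n m)" for n m
  proof (rule poly_mapping_eqI)
    fix k :: "int \<times> nat"
    obtain a i where k: "k = (a,i)" by (metis prod.exhaust)
    show "Poly_Mapping.lookup (f (bas n m)) k = Poly_Mapping.lookup (phi_alpha \<alpha> (bas n m)) k"
    proof (cases "i = m")
      case True
      then show ?thesis using main[of m] unfolding k G_def by (simp add: lookup_phi lookup_bas)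
    next
      case False
      then show ?thesis using Hdeg_lookup[OF F(4)[OF bas_Hdeg[of n m]], of i a] unfolding k
        by (simp add: lookup_phi lookup_bas)
    qed
  qed
  have "f = phi_alpha \<alpha>"
    by (rule linear_eqI[OF F(1) phi_linear]) (metis bas_def fb prod.exhaust)
  then show ?thesis using anz by blast
qed


theorem theorem2p12:
  fixes q :: "'k::field"
  assumes "q \<noteq> 0"
    and "\<forall>n::nat. n > 0 \<longrightarrow> q ^ n \<noteq> 1"
  shows "(phi_alpha :: (int \<Rightarrow> 'k) \<Rightarrow> 'k hopf \<Rightarrow> 'k hopf) \<in> iso seq_group (Aut_0_gr_group q)"
proof -
  have hom: "(phi_alpha :: (int \<Rightarrow> 'k) \<Rightarrow> 'k hopf \<Rightarrow> 'k hopf) \<in> hom seq_group (Aut_0_gr_group q)"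
    by (rule homI) (auto simp: seq_group_def Aut_0_gr_group_def phi_in_Aut phi_comp)
  have inj: "inj_on (phi_alpha :: (int \<Rightarrow> 'k) \<Rightarrow> 'k hopf \<Rightarrow> 'k hopf) (carrier seq_group)"
  proof (rule inj_onI)
    fix \<alpha> \<beta> :: "int \<Rightarrow> 'k"
    assume e: "phi_alpha \<alpha> = (phi_alpha \<beta> :: 'k hopf \<Rightarrow> 'k hopf)"
    show "\<alpha> = \<beta>"
    proof
      fix n
      have "Poly_Mapping.lookup (phi_alpha \<alpha> (bas n 1 :: 'k hopf)) (n,1) = Poly_Mapping.lookup (phi_alpha \<beta> (bas n 1 :: 'k hopf)) (n,1)"
        using e by simp
      then show "\<alpha> n = \<beta> n" by (simp add: lookup_phi lookup_bas PP_def)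
    qed
  qed
  have img: "(phi_alpha :: (int \<Rightarrow> 'k) \<Rightarrow> 'k hopf \<Rightarrow> 'k hopf) ` carrier seq_group = carrier (Aut_0_gr_group q)"
  proof
    show "(phi_alpha :: (int \<Rightarrow> 'k) \<Rightarrow> 'k hopf \<Rightarrow> 'k hopf) ` carrier seq_group \<subseteq> carrier (Aut_0_gr_group q)"
      by (auto simp: seq_group_def Aut_0_gr_group_def phi_in_Aut)
    show "carrier (Aut_0_gr_group q) \<subseteq> (phi_alpha :: (int \<Rightarrow> 'k) \<Rightarrow> 'k hopf \<Rightarrow> 'k hopf) ` carrier seq_group"
    proof
      fix f assume "f \<in> carrier (Aut_0_gr_group q)"
      then have "f \<in> Aut_0_gr q" by (simp add: Aut_0_gr_group_def)
      then obtain \<alpha> where "\<forall>n. \<alpha> n \<noteq> 0" "f = phi_alpha \<alpha>" using classify[OF _ assms(2)] by blast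
      then show "f \<in> (phi_alpha :: (int \<Rightarrow> 'k) \<Rightarrow> 'k hopf \<Rightarrow> 'k hopf) ` carrier seq_group"
        by (auto simp: seq_group_def)
    qed
  qed
  show ?thesis using hom inj img by (simp add: iso_def bij_betw_def)
qed

end
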